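(* Let $k\ge1$ be an integer and assume conditions $\mathbf A_1$ and $\mathbf A_2$ (stated in the context). Then for every $p>0$ and every $\delta>0$, $$\lim_{n\to\infty}n^p\max_{0\le l\le k-1}\mathbf P\big(\|S_{\vartheta,n}^{(l)}\|>\delta\big)=0.$$
   Context: $\|f\|^2=\int_0^1f^2(x)dx$. Fix $\eta>0$ and a kernel $V\in C^\infty(\mathbb R)$ with $V(u)=0$ for $|u|\ge1$ and $\int_{-1}^1V=1$; set $I_\eta(x)=\eta^{-1}\int_{\mathbb R}\mathbf 1_{\{|u|\le1-\eta\}}V((u-x)/\eta)du$. Let $e_1=1/\sqrt2$, $e_j(x)=\mathrm{Tr}_j(\pi[j/2]x)$ for $j\ge2$ ($\mathrm{Tr}_j=\cos$ for even $j$, $\sin$ for odd $j$). Given sequences $h_n>0$, $N_n\in\mathbb N$, put $M_n=[1/(2h_n)]-1$, $\tilde x_m=2mh_n$, $v_m(x)=(x-\tilde x_m)/h_n$, $D_{m,j}(x)=e_j(v_m(x))I_\eta(v_m(x))$, and for an array $z=(z_{m,j})_{1\le m\le M_n,1\le j\le N_n}$, $S_{z,n}(x)=\sum_{m=1}^{M_n}\sum_{j=1}^{N_n}z_{m,j}D_{m,j}(x)$. The random array $\vartheta$ has entries $\vartheta_{m,j}=t_{m,j}\zeta_{m,j}$, with $(\zeta_{m,j})$ i.i.d. $\mathcal N(0,1)$ and $t_{m,j}>0$ nonrandom; $t_n^*=\max_{1\le m\le M_n}\sum_{j=1}^{N_n}t_{m,j}$. $\mathbf A_1$: $N_n\to\infty$,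 $N_n^p/n\to0$ for every $p>0$, and there are $0<\delta_1<1$, $\delta_2>0$ with $h_n=O(n^{-\delta_1})$ and $h_n^{-1}=O(n^{\delta_2})$. $\mathbf A_2$: there are $d_n>0$ with $\lim_n\frac{d_n}{h_n^{2k-1}}\sum_{m=1}^{M_n}\sum_{j=1}^{N_n}t_{m,j}^2j^{2(k-1)}=0$, $\lim_n\sqrt{d_n}\,t_n^*=0$, and $\lim_nn^pe^{-d_n/2}=0$ for every $p>0$. *)

theory Defs
  imports "HOL-Analysis.Analysis" "HOL-Probability.Probability"
begin

definition smooth_real :: "(real \<Rightarrow> real) \<Rightarrow> bool" where
  "smooth_real f \<longleftrightarrow> (\<forall>n x. ((deriv ^^ n) f) differentiable (at x))"

definition L2norm01 :: "(real \<Rightarrow> real) \<Rightarrow> real" where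
  "L2norm01 f = sqrt (integral {0..1} (\<lambda>x. (f x)^2))"

definition I_eta :: "real \<Rightarrow> (real \<Rightarrow> real) \<Rightarrow> real \<Rightarrow> real" where
  "I_eta \<eta> V x = integral UNIV (\<lambda>u. indicator {u. \<bar>u\<bar> \<le> 1 - \<eta>} u * V ((u - x) / \<eta>)) / \<eta>"

definition e_basis :: "nat \<Rightarrow> real \<Rightarrow> real" where
  "e_basis j x = (if j = 1 then 1 / sqrt 2
                  else if even j then cos (pi * real (j div 2) * x)
                  else sin (pi * real (j div 2) * x))"

(* M_n = [1/(2 h_n)] - 1 (taken as 0 if negative) *)
definition M_of :: "real \<Rightarrow> nat" where
  "M_of h = nat (\<lfloor>1 / (2 * h)\<rfloor> - 1)"

definition D_fun :: "real \<Rightarrow> (real \<Rightarrow> real) \<Rightarrow> real \<Rightarrow> nat \<Rightarrow> nat \<Rightarrow> real \<Rightarrow> real" where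
  "D_fun \<eta> V h m j x =
     (let v = (x - 2 * real m * h) / h in e_basis j v * I_eta \<eta> V v)"

definition S_fun :: "real \<Rightarrow> (real \<Rightarrow> real) \<Rightarrow> real \<Rightarrow> nat \<Rightarrow> (nat \<Rightarrow> nat \<Rightarrow> real) \<Rightarrow> real \<Rightarrow> real" where
  "S_fun \<eta> V h N z x = (\<Sum>m=1..M_of h. \<Sum>j=1..N. z m j * D_fun \<eta> V h m j x)"

(* t_n^* = max_m \<Sum>_j t_{m,j}; convention 0 when M_n = 0 *)
definition t_star :: "nat \<Rightarrow> nat \<Rightarrow> (nat \<Rightarrow> nat \<Rightarrow> real) \<Rightarrow> real" where
  "t_star M N t = Max (insert 0 {(\<Sum>j=1..N. t m j) | m. m \<in> {1..M}})"

end

theory Submission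
  imports Defs
begin


definition smooth_upto :: "nat \<Rightarrow> (real \<Rightarrow> real) \<Rightarrow> bool" where
  "smooth_upto n f \<longleftrightarrow> (\<forall>i<n. \<forall>x. ((deriv ^^ i) f) differentiable (at x))"

lemma smooth_upto_mono: "smooth_upto n f \<Longrightarrow> m \<le> n \<Longrightarrow> smooth_upto m f"
  unfolding smooth_upto_def by auto

lemma smooth_real_upto: "smooth_real f \<longleftrightarrow> (\<forall>n. smooth_upto n f)"
  unfolding smooth_real_def smooth_upto_def by (meson lessI)

lemma smooth_upto_Suc: "smooth_upto (Suc n) f \<longleftrightarrow> (\<forall>x. f differentiable (at x)) \<and> smooth_upto n (deriv f)"
  unfolding smooth_upto_def
  by (auto simp: funpow_swap1 less_Suc_eq_0_disj)

lemma smooth_deriv: "smooth_real f \<Longrightarrow> smooth_real (deriv f)"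
  unfolding smooth_real_def
proof (intro allI)
  fix n x assume a: "\<forall>n x. (deriv ^^ n) f differentiable at x"
  have "(deriv ^^ n) (deriv f) = (deriv ^^ Suc n) f" by (simp only: funpow_Suc_right o_apply)
  then show "(deriv ^^ n) (deriv f) differentiable at x" using a[rule_format, of "Suc n" x] by (simp only:)
qed

lemma smooth_differentiable: "smooth_real f \<Longrightarrow> f differentiable (at x)"
  unfolding smooth_real_def by (drule spec[of _ 0]) simp

lemma deriv_fun_add:
  fixes f g :: "real \<Rightarrow> real"
  assumes "\<And>x. f differentiable (at x)" "\<And>x. g differentiable (at x)"
  shows "deriv (\<lambda>x. f x + g x) = (\<lambda>x. deriv f x + deriv g x)"
proof
  fix x
  have "DERIV f x :> deriv f x" "DERIV g x :> deriv g x"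
    using assms(1)[of x] assms(2)[of x] by (simp_all only: DERIV_deriv_iff_real_differentiable)
  then show "deriv (\<lambda>x. f x + g x) x = deriv f x + deriv g x"
    by (intro DERIV_imp_deriv DERIV_add)
qed

lemma deriv_fun_cmult:
  fixes f :: "real \<Rightarrow> real"
  assumes "\<And>x. f differentiable (at x)"
  shows "deriv (\<lambda>x. c * f x) = (\<lambda>x. c * deriv f x)"
proof
  fix x
  have "DERIV f x :> deriv f x"
    using assms[of x] by (simp only: DERIV_deriv_iff_real_differentiable)
  then show "deriv (\<lambda>x. c * f x) x = c * deriv f x"
    by (intro DERIV_imp_deriv DERIV_cmult)
qed

lemma deriv_fun_mult:
  fixes f g :: "real \<Rightarrow> real"
  assumes "\<And>x. f differentiable (at x)" "\<And>x. g differentiable (at x)"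
  shows "deriv (\<lambda>x. f x * g x) = (\<lambda>x. deriv f x * g x + f x * deriv g x)"
proof
  fix x
  have "DERIV f x :> deriv f x" "DERIV g x :> deriv g x"
    using assms(1)[of x] assms(2)[of x] by (simp_all only: DERIV_deriv_iff_real_differentiable)
  then show "deriv (\<lambda>x. f x * g x) x = deriv f x * g x + f x * deriv g x"
    by (intro DERIV_imp_deriv) (auto intro!: derivative_eq_intros)
qed

lemma derivn_add:
  "smooth_upto n f \<Longrightarrow> smooth_upto n g \<Longrightarrow>
   (deriv ^^ n) (\<lambda>x. f x + g x) = (\<lambda>x. (deriv ^^ n) f x + (deriv ^^ n) g x)"
proof (induction n arbitrary: f g)
  case 0 then show ?case by simp
next
  case (Suc n)
  then have d: "\<And>x. f differentiable (at x)" "\<And>x. g differentiable (at x)"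
    and s: "smooth_upto n (deriv f)" "smooth_upto n (deriv g)"
    by (auto simp: smooth_upto_Suc)
  have "(deriv ^^ Suc n) (\<lambda>x. f x + g x) = (deriv ^^ n) (deriv (\<lambda>x. f x + g x))"
    by (simp only: funpow_Suc_right o_apply)
  also have "\<dots> = (deriv ^^ n) (\<lambda>x. deriv f x + deriv g x)" using deriv_fun_add[OF d] by simp
  also have "\<dots> = (\<lambda>x. (deriv ^^ n) (deriv f) x + (deriv ^^ n) (deriv g) x)" using Suc.IH[OF s] .
  finally show ?case by (simp only: funpow_Suc_right o_apply)
qed

lemma derivn_cmult:
  "smooth_upto n f \<Longrightarrow> (deriv ^^ n) (\<lambda>x. c * f x) = (\<lambda>x. c * (deriv ^^ n) f x)"
proof (induction n arbitrary: f)
  case 0 then show ?case by simp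
next
  case (Suc n)
  then have d: "\<And>x. f differentiable (at x)" and s: "smooth_upto n (deriv f)"
    by (auto simp: smooth_upto_Suc)
  have "(deriv ^^ Suc n) (\<lambda>x. c * f x) = (deriv ^^ n) (deriv (\<lambda>x. c * f x))"
    by (simp only: funpow_Suc_right o_apply)
  also have "\<dots> = (deriv ^^ n) (\<lambda>x. c * deriv f x)" using deriv_fun_cmult[OF d] by simp
  also have "\<dots> = (\<lambda>x. c * (deriv ^^ n) (deriv f) x)" using Suc.IH[OF s] .
  finally show ?case by (simp only: funpow_Suc_right o_apply)
qed

lemma smooth_upto_add: "smooth_upto n f \<Longrightarrow> smooth_upto n g \<Longrightarrow> smooth_upto n (\<lambda>x. f x + g x)"
proof -
  assume a: "smooth_upto n f" "smooth_upto n g"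
  show ?thesis unfolding smooth_upto_def
  proof (intro allI impI)
    fix i x assume "i < n"
    then have "smooth_upto i f" "smooth_upto i g" "smooth_upto (Suc i) f" "smooth_upto (Suc i) g"
      using a smooth_upto_mono by auto
    then have e: "(deriv ^^ i) (\<lambda>x. f x + g x) = (\<lambda>x. (deriv ^^ i) f x + (deriv ^^ i) g x)"
      and d: "(deriv ^^ i) f differentiable at x" "(deriv ^^ i) g differentiable at x"
      by (auto intro: derivn_add simp only: smooth_upto_def)
    show "(deriv ^^ i) (\<lambda>x. f x + g x) differentiable at x"
      unfolding e using d by (rule differentiable_add)
  qed
qed

lemma smooth_upto_cmult: "smooth_upto n f \<Longrightarrow> smooth_upto n (\<lambda>x. c * f x)"
proof -
  assume a: "smooth_upto n f"
  show ?thesis unfolding smooth_upto_def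
  proof (intro allI impI)
    fix i x assume "i < n"
    then have "smooth_upto i f" "smooth_upto (Suc i) f"
      using a smooth_upto_mono by auto
    then have e: "(deriv ^^ i) (\<lambda>x. c * f x) = (\<lambda>x. c * (deriv ^^ i) f x)"
      and d: "(deriv ^^ i) f differentiable at x"
      by (auto intro: derivn_cmult simp only: smooth_upto_def)
    show "(deriv ^^ i) (\<lambda>x. c * f x) differentiable at x"
      unfolding e using d by (intro differentiable_mult differentiable_const)
  qed
qed

lemma smooth_upto_mult: "smooth_real f \<Longrightarrow> smooth_real g \<Longrightarrow> smooth_upto n (\<lambda>x. f x * g x)"
proof (induction n arbitrary: f g)
  case 0 then show ?case by (simp add: smooth_upto_def)
next
  case (Suc n)
  then have d: "\<And>x. f differentiable (at x)" "\<And>x. g differentiable (at x)"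
    using Suc.prems smooth_differentiable by auto
  have sf: "smooth_real (deriv f)" "smooth_real (deriv g)" using Suc.prems smooth_deriv by auto
  have "smooth_upto n (\<lambda>x. deriv f x * g x + f x * deriv g x)"
    by (intro smooth_upto_add Suc.IH sf Suc.prems)
  moreover have "\<And>x. (\<lambda>x. f x * g x) differentiable at x" using d by auto
  ultimately show ?case by (simp add: smooth_upto_Suc deriv_fun_mult[OF d])
qed

lemma smooth_mult: "smooth_real f \<Longrightarrow> smooth_real g \<Longrightarrow> smooth_real (\<lambda>x. f x * g x)"
  by (simp add: smooth_real_upto smooth_upto_mult)

lemma smooth_add: "smooth_real f \<Longrightarrow> smooth_real g \<Longrightarrow> smooth_real (\<lambda>x. f x + g x)"
  by (simp add: smooth_real_upto smooth_upto_add)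

lemma smooth_cmult: "smooth_real f \<Longrightarrow> smooth_real (\<lambda>x. c * f x)"
  by (simp add: smooth_real_upto smooth_upto_cmult)


lemma smooth_zero: "smooth_real (\<lambda>x. 0)"
proof -
  have "(deriv ^^ n) (\<lambda>x. 0::real) = (\<lambda>x. 0)" for n
    by (induction n) (auto simp: deriv_const)
  then show ?thesis unfolding smooth_real_def by simp
qed

lemma smooth_sum: "finite F \<Longrightarrow> (\<And>i. i \<in> F \<Longrightarrow> smooth_real (f i)) \<Longrightarrow> smooth_real (\<lambda>x. \<Sum>i\<in>F. f i x)"
proof (induction F rule: finite_induct)
  case empty then show ?case using smooth_zero by simp
next
  case (insert a F) then show ?case by (simp add: smooth_add)
qed

lemma derivn_sum: "finite F \<Longrightarrow> (\<And>i. i \<in> F \<Longrightarrow> smooth_real (f i)) \<Longrightarrow>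
   (deriv ^^ n) (\<lambda>x. \<Sum>i\<in>F. f i x) = (\<lambda>x. \<Sum>i\<in>F. (deriv ^^ n) (f i) x)"
proof (induction F rule: finite_induct)
  case empty
  have "(deriv ^^ n) (\<lambda>x. 0::real) = (\<lambda>x. 0)" for n
    by (induction n) (auto simp: deriv_const)
  then show ?case by simp
next
  case (insert a F)
  have "smooth_real (\<lambda>x. \<Sum>i\<in>F. f i x)" using insert by (intro smooth_sum) auto
  then have "(deriv ^^ n) (\<lambda>x. f a x + (\<Sum>i\<in>F. f i x)) = (\<lambda>x. (deriv ^^ n) (f a) x + (deriv ^^ n) (\<lambda>x. \<Sum>i\<in>F. f i x) x)"
    using insert by (intro derivn_add) (auto simp: smooth_real_upto)
  then show ?case using insert by simp
qed

lemma derivn_cmult_smooth: "smooth_real f \<Longrightarrow> (deriv ^^ n) (\<lambda>x. c * f x) = (\<lambda>x. c * (deriv ^^ n) f x)"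
  by (simp add: derivn_cmult smooth_real_upto)

lemma smooth_derivn: "smooth_real f \<Longrightarrow> smooth_real ((deriv ^^ n) f)"
  by (induction n) (auto simp: smooth_deriv)

lemma smooth_upto_affine: "smooth_real f \<Longrightarrow> smooth_upto n (\<lambda>x. f (a * x + b))"
proof (induction n arbitrary: f)
  case 0 then show ?case by (simp add: smooth_upto_def)
next
  case (Suc n)
  have D: "DERIV f y :> deriv f y" for y using smooth_differentiable[OF Suc.prems] by (simp only: DERIV_deriv_iff_real_differentiable)
  have "DERIV (\<lambda>x. f (a * x + b)) x :> a * deriv f (a * x + b)" for x
  proof -
    have "((\<lambda>x. a*x+b) has_real_derivative a) (at x)" by (auto intro!: derivative_eq_intros)
    from DERIV_chain2[OF D[of "a*x+b"] this] show ?thesis by (simp add: mult.commute)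
  qed
  note dx = this
  have dd: "deriv (\<lambda>x. f (a * x + b)) = (\<lambda>x. a * deriv f (a * x + b))"
    using DERIV_imp_deriv[OF dx] by (rule ext)
  have dif: "(\<lambda>x. f (a * x + b)) differentiable at x" for x
    unfolding real_differentiable_def using dx by blast
  have "smooth_upto n (\<lambda>x. deriv f (a * x + b))" using Suc.IH smooth_deriv Suc.prems by blast
  then have "smooth_upto n (\<lambda>x. a * deriv f (a * x + b))" by (rule smooth_upto_cmult)
  then show ?case unfolding smooth_upto_Suc dd using dif by blast
qed

lemma smooth_affine: "smooth_real f \<Longrightarrow> smooth_real (\<lambda>x. f (a * x + b))"
  by (simp add: smooth_real_upto smooth_upto_affine)

lemma derivn_affine: "smooth_real f \<Longrightarrow> (deriv ^^ n) (\<lambda>x. f (a * x + b)) = (\<lambda>x. a ^ n * (deriv ^^ n) f (a * x + b))"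
proof (induction n arbitrary: f)
  case 0 then show ?case by simp
next
  case (Suc n)
  have D: "DERIV f y :> deriv f y" for y using smooth_differentiable[OF Suc.prems] by (simp only: DERIV_deriv_iff_real_differentiable)
  have "DERIV (\<lambda>x. f (a * x + b)) x :> a * deriv f (a * x + b)" for x
  proof -
    have "((\<lambda>x. a*x+b) has_real_derivative a) (at x)" by (auto intro!: derivative_eq_intros)
    from DERIV_chain2[OF D[of "a*x+b"] this] show ?thesis by (simp add: mult.commute)
  qed
  note dx = this
  have dd: "deriv (\<lambda>x. f (a * x + b)) = (\<lambda>x. a * deriv f (a * x + b))"
    using DERIV_imp_deriv[OF dx] by (rule ext)
  have "(deriv ^^ Suc n) (\<lambda>x. f (a * x + b)) = (deriv ^^ n) (\<lambda>x. a * deriv f (a * x + b))"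
    by (simp only: funpow_Suc_right o_apply dd)
  also have "\<dots> = (\<lambda>x. a * (deriv ^^ n) (\<lambda>x. deriv f (a * x + b)) x)"
    using smooth_affine smooth_deriv Suc.prems by (intro derivn_cmult_smooth) blast
  also have "\<dots> = (\<lambda>x. a * (a ^ n * (deriv ^^ n) (deriv f) (a * x + b)))"
    using Suc.IH[OF smooth_deriv[OF Suc.prems]] by simp
  finally show ?case by (simp only: funpow_Suc_right o_apply power_Suc mult.assoc)
qed

lemma derivn_mult_bound:
  assumes "smooth_real f" "smooth_real g" "0 \<le> a" "0 \<le> b"
    "\<And>i x. i \<le> n \<Longrightarrow> \<bar>(deriv ^^ i) f x\<bar> \<le> A * a ^ i"
    "\<And>i x. i \<le> n \<Longrightarrow> \<bar>(deriv ^^ i) g x\<bar> \<le> B * b ^ i"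
  shows "\<bar>(deriv ^^ n) (\<lambda>x. f x * g x) x\<bar> \<le> A * B * (a + b) ^ n"
  using assms
proof (induction n arbitrary: f g A B x)
  case 0
  have "\<bar>f x\<bar> \<le> A" "\<bar>g x\<bar> \<le> B" using "0.prems"(5,6)[of 0 x] by auto
  then show ?case by (simp add: abs_mult mult_mono')
next
  case (Suc n)
  have d: "\<And>x. f differentiable (at x)" "\<And>x. g differentiable (at x)"
    using Suc.prems smooth_differentiable by auto
  have sf: "smooth_real (deriv f)" "smooth_real (deriv g)" using Suc.prems smooth_deriv by auto
  have b1: "\<bar>(deriv ^^ n) (\<lambda>x. deriv f x * g x) x\<bar> \<le> (A * a) * B * (a + b) ^ n"
  proof (rule Suc.IH[OF sf(1) Suc.prems(2) Suc.prems(3,4)])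
    fix i x assume "i \<le> n"
    then show "\<bar>(deriv ^^ i) (deriv f) x\<bar> \<le> A * a * a ^ i"
      using Suc.prems(5)[of "Suc i" x] by (simp add: funpow_swap1[symmetric] ac_simps)
  next
    fix i x assume "i \<le> n"
    then show "\<bar>(deriv ^^ i) g x\<bar> \<le> B * b ^ i" using Suc.prems(6) by simp
  qed
  have b2: "\<bar>(deriv ^^ n) (\<lambda>x. f x * deriv g x) x\<bar> \<le> A * (B * b) * (a + b) ^ n"
  proof (rule Suc.IH[OF Suc.prems(1) sf(2) Suc.prems(3,4)])
    fix i x assume "i \<le> n"
    then show "\<bar>(deriv ^^ i) (deriv g) x\<bar> \<le> B * b * b ^ i"
      using Suc.prems(6)[of "Suc i" x] by (simp add: funpow_swap1[symmetric] ac_simps)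
  next
    fix i x assume "i \<le> n"
    then show "\<bar>(deriv ^^ i) f x\<bar> \<le> A * a ^ i" using Suc.prems(5) by simp
  qed
  have "(deriv ^^ Suc n) (\<lambda>x. f x * g x) = (deriv ^^ n) (\<lambda>x. deriv f x * g x + f x * deriv g x)"
    by (simp only: funpow_Suc_right o_apply deriv_fun_mult[OF d])
  also have "\<dots> = (\<lambda>x. (deriv ^^ n) (\<lambda>x. deriv f x * g x) x + (deriv ^^ n) (\<lambda>x. f x * deriv g x) x)"
    by (intro derivn_add smooth_upto_mult sf Suc.prems(1,2))
  finally have e0: "(deriv ^^ Suc n) (\<lambda>x. f x * g x) = (\<lambda>x. (deriv ^^ n) (\<lambda>x. deriv f x * g x) x + (deriv ^^ n) (\<lambda>x. f x * deriv g x) x)" .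
  have e: "(deriv ^^ Suc n) (\<lambda>x. f x * g x) x = (deriv ^^ n) (\<lambda>x. deriv f x * g x) x + (deriv ^^ n) (\<lambda>x. f x * deriv g x) x"
    using fun_cong[OF e0, of x] by (simp only:)
  have t: "\<bar>(deriv ^^ n) (\<lambda>x. deriv f x * g x) x + (deriv ^^ n) (\<lambda>x. f x * deriv g x) x\<bar> \<le>
     \<bar>(deriv ^^ n) (\<lambda>x. deriv f x * g x) x\<bar> + \<bar>(deriv ^^ n) (\<lambda>x. f x * deriv g x) x\<bar>"
    by (rule abs_triangle_ineq)
  have "\<bar>(deriv ^^ Suc n) (\<lambda>x. f x * g x) x\<bar> \<le> (A * a) * B * (a + b) ^ n + A * (B * b) * (a + b) ^ n"
    unfolding e using b1 b2 t by linarith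
  also have "\<dots> = A * B * (a + b) ^ Suc n" by (simp add: algebra_simps)
  finally show ?case .
qed



definition tf :: "real \<Rightarrow> real \<Rightarrow> real \<Rightarrow> real \<Rightarrow> real" where
  "tf \<alpha> \<beta> a x = \<alpha> * cos (a * x) + \<beta> * sin (a * x)"

lemma DERIV_tf: "DERIV (tf \<alpha> \<beta> a) x :> tf (a * \<beta>) (- (a * \<alpha>)) a x"
  unfolding tf_def by (auto intro!: derivative_eq_intros simp: algebra_simps)

lemma deriv_tf: "deriv (tf \<alpha> \<beta> a) = tf (a * \<beta>) (- (a * \<alpha>)) a"
  using DERIV_imp_deriv[OF DERIV_tf] by (rule ext)

lemma derivn_tf: "\<exists>\<alpha>' \<beta>'. (deriv ^^ n) (tf \<alpha> \<beta> a) = tf \<alpha>' \<beta>' a \<and> \<bar>\<alpha>'\<bar> + \<bar>\<beta>'\<bar> \<le> \<bar>a\<bar> ^ n * (\<bar>\<alpha>\<bar> + \<bar>\<beta>\<bar>)"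
proof (induction n arbitrary: \<alpha> \<beta>)
  case 0 then show ?case by auto
next
  case (Suc n)
  obtain \<alpha>' \<beta>' where h: "(deriv ^^ n) (tf (a * \<beta>) (- (a * \<alpha>)) a) = tf \<alpha>' \<beta>' a"
    "\<bar>\<alpha>'\<bar> + \<bar>\<beta>'\<bar> \<le> \<bar>a\<bar> ^ n * (\<bar>a * \<beta>\<bar> + \<bar>- (a * \<alpha>)\<bar>)"
    using Suc.IH by blast
  have e: "(deriv ^^ Suc n) (tf \<alpha> \<beta> a) = tf \<alpha>' \<beta>' a"
    by (simp only: funpow_Suc_right o_apply deriv_tf h)
  have "\<bar>a\<bar> ^ n * (\<bar>a * \<beta>\<bar> + \<bar>- (a * \<alpha>)\<bar>) = \<bar>a\<bar> ^ Suc n * (\<bar>\<alpha>\<bar> + \<bar>\<beta>\<bar>)"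
    by (simp add: abs_mult algebra_simps)
  then have b: "\<bar>\<alpha>'\<bar> + \<bar>\<beta>'\<bar> \<le> \<bar>a\<bar> ^ Suc n * (\<bar>\<alpha>\<bar> + \<bar>\<beta>\<bar>)" using h(2) by linarith
  show ?case using e b by blast
qed

lemma tf_bound: "\<bar>tf \<alpha> \<beta> a x\<bar> \<le> \<bar>\<alpha>\<bar> + \<bar>\<beta>\<bar>"
proof -
  have "\<bar>\<alpha> * cos (a * x)\<bar> \<le> \<bar>\<alpha>\<bar>" "\<bar>\<beta> * sin (a * x)\<bar> \<le> \<bar>\<beta>\<bar>"
    by (auto simp: abs_mult intro: mult_left_le)
  then show ?thesis unfolding tf_def by linarith
qed

lemma smooth_tf: "smooth_real (tf \<alpha> \<beta> a)"
  unfolding smooth_real_def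
proof (intro allI)
  fix n x
  obtain \<alpha>' \<beta>' where "(deriv ^^ n) (tf \<alpha> \<beta> a) = tf \<alpha>' \<beta>' a" using derivn_tf by blast
  then show "(deriv ^^ n) (tf \<alpha> \<beta> a) differentiable at x"
    using DERIV_tf real_differentiable_def by metis
qed

lemma e_basis_tf: "e_basis j = tf (if j = 1 then 1 / sqrt 2 else if even j then 1 else 0)
   (if j = 1 then 0 else if even j then 0 else 1) (if j = 1 then 0 else pi * real (j div 2))"
  by (rule ext) (auto simp: e_basis_def tf_def)

lemma smooth_e_basis: "smooth_real (e_basis j)"
  unfolding e_basis_tf by (rule smooth_tf)

lemma e_basis_bound: "j \<ge> 1 \<Longrightarrow> \<bar>(deriv ^^ n) (e_basis j) x\<bar> \<le> 1 * (pi * real j) ^ n"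
proof -
  assume j: "j \<ge> 1"
  define \<alpha> where "\<alpha> = (if j = 1 then 1 / sqrt 2 else if even j then 1 else (0::real))"
  define \<beta> where "\<beta> = (if j = 1 then 0 else if even j then 0 else (1::real))"
  define a where "a = (if j = 1 then 0 else pi * real (j div 2))"
  obtain \<alpha>' \<beta>' where h: "(deriv ^^ n) (tf \<alpha> \<beta> a) = tf \<alpha>' \<beta>' a"
    "\<bar>\<alpha>'\<bar> + \<bar>\<beta>'\<bar> \<le> \<bar>a\<bar> ^ n * (\<bar>\<alpha>\<bar> + \<bar>\<beta>\<bar>)" using derivn_tf by blast
  have ab: "\<bar>\<alpha>\<bar> + \<bar>\<beta>\<bar> \<le> 1" unfolding \<alpha>_def \<beta>_def by (auto simp: real_le_rsqrt)
  have "real (j div 2) \<le> real j" by simp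
  then have "pi * real (j div 2) \<le> pi * real j" by (intro mult_left_mono) auto
  then have a: "\<bar>a\<bar> \<le> pi * real j" unfolding a_def by auto
  have "\<bar>(deriv ^^ n) (e_basis j) x\<bar> = \<bar>tf \<alpha>' \<beta>' a x\<bar>"
    unfolding e_basis_tf \<alpha>_def[symmetric] \<beta>_def[symmetric] a_def[symmetric] h(1) ..
  also have "\<dots> \<le> \<bar>a\<bar> ^ n * (\<bar>\<alpha>\<bar> + \<bar>\<beta>\<bar>)" using tf_bound h(2) by (rule order_trans)
  also have "\<dots> \<le> (pi * real j) ^ n * 1"
    by (intro mult_mono power_mono a ab) auto
  finally show ?thesis by simp
qed

lemma derivn_zero_outside:
  assumes "smooth_real V" "\<And>u. \<bar>u\<bar> \<ge> 1 \<Longrightarrow> V u = 0"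
  shows "\<bar>u\<bar> > 1 \<Longrightarrow> (deriv ^^ n) V u = 0"
proof (induction n arbitrary: u)
  case 0 then show ?case using assms(2) by simp
next
  case (Suc n)
  have "((\<lambda>x. 0) has_field_derivative 0) (at u)" by simp
  then have "((deriv ^^ n) V has_field_derivative 0) (at u)"
    by (rule has_field_derivative_transform_within_open[where S="{u. 1 < \<bar>u\<bar>}"])
      (auto intro!: open_Collect_less continuous_intros simp: Suc.prems Suc.IH)
  then show ?case by (simp add: DERIV_imp_deriv)
qed

lemma smooth_continuous: "smooth_real f \<Longrightarrow> continuous_on S f"
  by (meson continuous_at_imp_continuous_on differentiable_imp_continuous_within smooth_differentiable)

lemma derivn_bounded:
  assumes "smooth_real V" "\<And>u. \<bar>u\<bar> \<ge> 1 \<Longrightarrow> V u = 0"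
  shows "\<exists>K\<ge>0. \<forall>u. \<bar>(deriv ^^ n) V u\<bar> \<le> K"
proof -
  have c: "continuous_on {-1..1} ((deriv ^^ n) V)"
    using smooth_continuous smooth_derivn assms(1) by blast
  have "bounded ((deriv ^^ n) V ` {-1..1})"
    by (intro compact_imp_bounded compact_continuous_image c) auto
  then obtain K where K0: "\<forall>y\<in>(deriv ^^ n) V ` {-1..1}. norm y \<le> K"
    unfolding bounded_iff by blast
  then have K: "\<And>u. u \<in> {-1..1} \<Longrightarrow> \<bar>(deriv ^^ n) V u\<bar> \<le> K" by auto
  have "\<bar>(deriv ^^ n) V u\<bar> \<le> max K 0" for u
  proof (cases "\<bar>u\<bar> > 1")
    case True then show ?thesis using derivn_zero_outside[OF assms] by simp
  next
    case False then have "u \<in> {-1..1}" by auto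
    then show ?thesis using K by fastforce
  qed
  then show ?thesis by (intro exI[of _ "max K 0"]) auto
qed



lemma I_eta_interval: "I_eta \<eta> V = (\<lambda>v. integral {-(1-\<eta>)..1-\<eta>} (\<lambda>u. V ((u - v) / \<eta>)) / \<eta>)"
proof
  fix v
  have s: "{u. \<bar>u\<bar> \<le> 1 - \<eta>} = {-(1-\<eta>)..1-\<eta>}" by auto
  have eq: "(\<lambda>u. indicator {u. \<bar>u\<bar> \<le> 1 - \<eta>} u * V ((u - v) / \<eta>)) =
        (\<lambda>u. if u \<in> {-(1-\<eta>)..1-\<eta>} then V ((u - v) / \<eta>) else 0)"
    unfolding s by (auto simp: indicator_def)
  show "I_eta \<eta> V v = integral {-(1-\<eta>)..1-\<eta>} (\<lambda>u. V ((u - v) / \<eta>)) / \<eta>"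
    unfolding I_eta_def eq integral_restrict_UNIV ..
qed

lemma DERIV_param_int:
  assumes sW: "smooth_real W" and eta: "\<eta> > 0"
  shows "DERIV (\<lambda>v. integral {a..b} (\<lambda>u. K * W ((u - v) / \<eta>)) / \<eta>) v :>
      integral {a..b} (\<lambda>u. K * deriv W ((u - v) / \<eta>) * (-1/\<eta>)) / \<eta>"
proof -
  have cW': "continuous_on S (deriv W)" for S using smooth_continuous smooth_deriv sW by blast
  have cW: "continuous_on S W" for S using smooth_continuous sW by blast
  have DW: "DERIV W y :> deriv W y" for y
    using smooth_differentiable[OF sW] by (simp only: DERIV_deriv_iff_real_differentiable)
  have der: "((\<lambda>v. integral (cbox a b) (\<lambda>u. K * W ((u - v) / \<eta>))) has_field_derivative
      integral (cbox a b) (\<lambda>u. K * deriv W ((u - v) / \<eta>) * (-1/\<eta>))) (at v within UNIV)"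
  proof (rule leibniz_rule_field_derivative[where f="\<lambda>v u. K * W ((u - v) / \<eta>)"])
    fix x t :: real
    show "((\<lambda>x. K * W ((t - x) / \<eta>)) has_field_derivative
          K * deriv W ((t - x) / \<eta>) * (- 1 / \<eta>)) (at x within UNIV)"
    proof -
      have "((\<lambda>x. (t - x) / \<eta>) has_real_derivative (-1/\<eta>)) (at x)"
        using eta by (auto intro!: derivative_eq_intros simp: divide_simps)
      from DERIV_chain2[OF DW this] show ?thesis
        by (auto intro!: derivative_eq_intros simp: mult.assoc)
    qed
  next
    fix x :: real
    show "(\<lambda>u. K * W ((u - x) / \<eta>)) integrable_on cbox a b"
      unfolding cbox_interval
      by (intro integrable_continuous_interval continuous_intros continuous_on_compose2[OF cW]) (use eta in auto)
  next
    show "continuous_on (UNIV \<times> cbox a b) (\<lambda>(x, t). K * deriv W ((t - x) / \<eta>) * (-1/\<eta>))"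
      unfolding case_prod_beta by (intro continuous_intros continuous_on_compose2[OF cW']) (use eta in auto)
  qed auto
  then show ?thesis unfolding cbox_interval by (intro DERIV_cdivide) simp
qed

lemma derivn_I_eta:
  assumes V: "smooth_real V" and eta: "\<eta> > 0"
  shows "(deriv ^^ n) (I_eta \<eta> V) =
    (\<lambda>v. integral {-(1-\<eta>)..1-\<eta>} (\<lambda>u. (-1/\<eta>)^n * (deriv ^^ n) V ((u - v) / \<eta>)) / \<eta>)"
proof (induction n)
  case 0 then show ?case by (simp add: I_eta_interval)
next
  case (Suc n)
  define W where "W = (deriv ^^ n) V"
  have sW: "smooth_real W" unfolding W_def using V by (rule smooth_derivn)
  have W': "deriv W = (deriv ^^ Suc n) V" unfolding W_def by simp
  have "(deriv ^^ Suc n) (I_eta \<eta> V) = deriv (\<lambda>v. integral {-(1-\<eta>)..1-\<eta>} (\<lambda>u. (-1/\<eta>)^n * W ((u - v) / \<eta>)) / \<eta>)"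
    using Suc.IH by (simp add: W_def)
  also have "\<dots> = (\<lambda>v. integral {-(1-\<eta>)..1-\<eta>} (\<lambda>u. (-1/\<eta>)^n * deriv W ((u - v) / \<eta>) * (-1/\<eta>)) / \<eta>)"
    using DERIV_imp_deriv[OF DERIV_param_int[OF sW eta]] by (rule ext)
  also have "\<dots> = (\<lambda>v. integral {-(1-\<eta>)..1-\<eta>} (\<lambda>u. (-1/\<eta>)^Suc n * (deriv ^^ Suc n) V ((u - v) / \<eta>)) / \<eta>)"
    by (simp add: W' mult_ac)
  finally show ?case .
qed

lemma smooth_I_eta:
  assumes V: "smooth_real V" and eta: "\<eta> > 0"
  shows "smooth_real (I_eta \<eta> V)"
  unfolding smooth_real_def
proof (intro allI)
  fix n x
  show "(deriv ^^ n) (I_eta \<eta> V) differentiable at x"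
    unfolding derivn_I_eta[OF V eta] real_differentiable_def
    using DERIV_param_int[OF smooth_derivn[OF V] eta] by blast
qed

lemma I_eta_bound:
  assumes V: "smooth_real V" "\<And>u. \<bar>u\<bar> \<ge> 1 \<Longrightarrow> V u = 0" and eta: "\<eta> > 0"
  shows "\<exists>B\<ge>0. \<forall>v. \<bar>(deriv ^^ n) (I_eta \<eta> V) v\<bar> \<le> B"
proof -
  obtain K where K: "K \<ge> 0" "\<And>u. \<bar>(deriv ^^ n) V u\<bar> \<le> K" using derivn_bounded[OF V] by blast
  define c where "c = 1 - \<eta>"
  define B where "B = \<bar>(-1/\<eta>)^n\<bar> * K"
  have B0: "B \<ge> 0" unfolding B_def using K by simp
  have "\<bar>(deriv ^^ n) (I_eta \<eta> V) v\<bar> \<le> B * 2 / \<eta>" for v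
  proof -
    let ?f = "\<lambda>u. (-1/\<eta>)^n * (deriv ^^ n) V ((u - v) / \<eta>)"
    have cW: "continuous_on S ((deriv ^^ n) V)" for S using smooth_continuous smooth_derivn V(1) by blast
    have int: "?f integrable_on cbox (-c) c"
      unfolding cbox_interval
      by (intro integrable_continuous_interval continuous_intros continuous_on_compose2[OF cW]) (use eta in auto)
    have "norm (integral (cbox (-c) c) ?f) \<le> B * Henstock_Kurzweil_Integration.content (cbox (-c) c)"
    proof (rule has_integral_bound[OF B0 integrable_integral[OF int]])
      fix u show "norm (?f u) \<le> B" unfolding B_def using K(2)
        by (simp add: abs_mult mult_left_mono)
    qed
    also have "\<dots> \<le> B * 2"
      using B0 eta unfolding cbox_interval c_def by (intro mult_left_mono) auto
    finally have "\<bar>integral {-c..c} ?f\<bar> \<le> B * 2" by (simp add: cbox_interval)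
    then show ?thesis unfolding derivn_I_eta[OF V(1) eta] c_def using eta
      by (simp add: divide_right_mono)
  qed
  moreover have "B * 2 / \<eta> \<ge> 0" using B0 eta by simp
  ultimately show ?thesis by blast
qed



definition gfun :: "real \<Rightarrow> (real \<Rightarrow> real) \<Rightarrow> nat \<Rightarrow> real \<Rightarrow> real" where
  "gfun \<eta> V j v = e_basis j v * I_eta \<eta> V v"

lemma D_fun_eq: "h > 0 \<Longrightarrow> D_fun \<eta> V h m j = (\<lambda>x. gfun \<eta> V j ((1/h) * x + (- 2 * real m)))"
  by (rule ext) (simp add: D_fun_def gfun_def Let_def diff_divide_distrib)

lemma smooth_gfun: "smooth_real V \<Longrightarrow> \<eta> > 0 \<Longrightarrow> smooth_real (gfun \<eta> V j)"
  unfolding gfun_def[abs_def] by (intro smooth_mult smooth_e_basis smooth_I_eta)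

lemma smooth_D_fun: "smooth_real V \<Longrightarrow> \<eta> > 0 \<Longrightarrow> h > 0 \<Longrightarrow> smooth_real (D_fun \<eta> V h m j)"
  unfolding D_fun_eq by (intro smooth_affine smooth_gfun)

lemma I_eta_bound_upto:
  assumes V: "smooth_real V" "\<And>u. \<bar>u\<bar> \<ge> 1 \<Longrightarrow> V u = 0" and eta: "\<eta> > 0"
  shows "\<exists>B\<ge>0. \<forall>i\<le>L. \<forall>v. \<bar>(deriv ^^ i) (I_eta \<eta> V) v\<bar> \<le> B"
proof (induction L)
  case 0 then show ?case using I_eta_bound[OF V eta, of 0] by auto
next
  case (Suc L)
  obtain B1 where B1: "B1 \<ge> 0" "\<forall>i\<le>L. \<forall>v. \<bar>(deriv ^^ i) (I_eta \<eta> V) v\<bar> \<le> B1" using Suc.IH by blast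
  obtain B2 where B2: "B2 \<ge> 0" "\<forall>v. \<bar>(deriv ^^ Suc L) (I_eta \<eta> V) v\<bar> \<le> B2"
    using I_eta_bound[OF V eta, of "Suc L"] by blast
  have "\<forall>i\<le>Suc L. \<forall>v. \<bar>(deriv ^^ i) (I_eta \<eta> V) v\<bar> \<le> max B1 B2"
  proof (intro allI impI)
    fix i v assume "i \<le> Suc L"
    then consider "i \<le> L" | "i = Suc L" by linarith
    then show "\<bar>(deriv ^^ i) (I_eta \<eta> V) v\<bar> \<le> max B1 B2"
    proof cases
      case 1 then show ?thesis using B1(2) by (meson max.coboundedI1)
    next
      case 2 then show ?thesis using B2(2) by (meson max.coboundedI2)
    qed
  qed
  then show ?case using B1(1) by (intro exI[of _ "max B1 B2"]) auto
qed

lemma D_fun_bound: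
  assumes V: "smooth_real V" and eta: "\<eta> > 0" and h: "h > 0" and j: "j \<ge> 1" and l: "l \<le> L"
    and B: "\<forall>i\<le>L. \<forall>v. \<bar>(deriv ^^ i) (I_eta \<eta> V) v\<bar> \<le> B"
  shows "\<bar>(deriv ^^ l) (D_fun \<eta> V h m j) x\<bar> \<le> (1/h)^l * (B * ((pi + 1) * real j) ^ l)"
proof -
  let ?v = "(1/h) * x + (- 2 * real m)"
  have g: "\<bar>(deriv ^^ l) (gfun \<eta> V j) y\<bar> \<le> 1 * B * (pi * real j + 1) ^ l" for y
    unfolding gfun_def[abs_def]
  proof (rule derivn_mult_bound[OF smooth_e_basis smooth_I_eta[OF V eta]])
    fix i x assume "i \<le> l"
    show "\<bar>(deriv ^^ i) (e_basis j) x\<bar> \<le> 1 * (pi * real j) ^ i" using e_basis_bound[OF j] .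
    show "\<bar>(deriv ^^ i) (I_eta \<eta> V) x\<bar> \<le> B * 1 ^ i" using B \<open>i \<le> l\<close> l by simp
  qed auto
  have "pi * real j + 1 \<le> (pi + 1) * real j" using j by (simp add: algebra_simps)
  then have p: "(pi * real j + 1) ^ l \<le> ((pi + 1) * real j) ^ l"
    by (intro power_mono) (auto intro: add_nonneg_nonneg)
  have B0: "B \<ge> 0" using B[rule_format, of 0 0] by simp
  have "\<bar>(deriv ^^ l) (D_fun \<eta> V h m j) x\<bar> = (1/h)^l * \<bar>(deriv ^^ l) (gfun \<eta> V j) ?v\<bar>"
    unfolding D_fun_eq[OF h] derivn_affine[OF smooth_gfun[OF V eta]] using h by (simp add: abs_mult)
  also have "\<dots> \<le> (1/h)^l * (B * ((pi + 1) * real j) ^ l)"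
    using g[of ?v] p B0 h by (intro mult_left_mono) (auto intro: order_trans mult_left_mono)
  finally show ?thesis .
qed



lemma nn_integral_normal_density: "\<sigma> > 0 \<Longrightarrow> (\<integral>\<^sup>+z. ennreal (normal_density \<mu> \<sigma> z) \<partial>lborel) = 1"
proof -
  assume "\<sigma> > 0"
  interpret p: prob_space "density lborel (normal_density \<mu> \<sigma>)"
    using \<open>\<sigma> > 0\<close> by (rule prob_space_normal_density)
  have "emeasure (density lborel (normal_density \<mu> \<sigma>)) UNIV = 1"
    using p.emeasure_space_1 by simp
  then show ?thesis by (subst (asm) emeasure_density) auto
qed

lemma gauss_mgf:
  assumes \<sigma>: "\<sigma> > 0" and l: "0 \<le> lam" "lam * \<sigma>\<^sup>2 \<le> 1/4"
  shows "(\<integral>\<^sup>+z. ennreal (normal_density 0 \<sigma> z) * ennreal (exp (lam * z\<^sup>2)) \<partial>lborel) \<le> ennreal (sqrt 2)"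
proof -
  define r where "r = 1 - 2 * lam * \<sigma>\<^sup>2"
  have r: "r \<ge> 1/2" unfolding r_def using l by simp
  define \<sigma>' where "\<sigma>' = \<sigma> / sqrt r"
  have s2: "\<sigma>'\<^sup>2 = \<sigma>\<^sup>2 / r" unfolding \<sigma>'_def using r by (simp add: power_divide)
  have pw: "normal_density 0 \<sigma> z * exp (lam * z\<^sup>2) = (1 / sqrt r) * normal_density 0 \<sigma>' z" for z
  proof -
    have e: "exp (-(z - 0)\<^sup>2 / (2 * \<sigma>'\<^sup>2)) = exp (-(z - 0)\<^sup>2 / (2 * \<sigma>\<^sup>2)) * exp (lam * z\<^sup>2)"
      unfolding exp_add[symmetric] s2 using r \<sigma> by (simp add: r_def field_simps)
    have q: "sqrt (2 * pi * \<sigma>'\<^sup>2) = sqrt (2 * pi * \<sigma>\<^sup>2) / sqrt r"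
      unfolding s2 by (simp add: real_sqrt_divide[symmetric])
    show ?thesis unfolding normal_density_def e q using r \<sigma> by (simp add: field_simps)
  qed
  have "(\<integral>\<^sup>+z. ennreal (normal_density 0 \<sigma> z) * ennreal (exp (lam * z\<^sup>2)) \<partial>lborel)
      = (\<integral>\<^sup>+z. ennreal (1 / sqrt r) * ennreal (normal_density 0 \<sigma>' z) \<partial>lborel)"
  proof (intro nn_integral_cong)
    fix z
    have "ennreal (normal_density 0 \<sigma> z) * ennreal (exp (lam * z\<^sup>2)) = ennreal (normal_density 0 \<sigma> z * exp (lam * z\<^sup>2))"
      by (rule ennreal_mult[symmetric]) auto
    also have "\<dots> = ennreal (1 / sqrt r * normal_density 0 \<sigma>' z)" by (simp only: pw)
    also have "\<dots> = ennreal (1 / sqrt r) * ennreal (normal_density 0 \<sigma>' z)"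
      by (rule ennreal_mult) (use r in auto)
    finally show "ennreal (normal_density 0 \<sigma> z) * ennreal (exp (lam * z\<^sup>2)) = ennreal (1 / sqrt r) * ennreal (normal_density 0 \<sigma>' z)" .
  qed
  also have "\<dots> = ennreal (1 / sqrt r) * (\<integral>\<^sup>+z. ennreal (normal_density 0 \<sigma>' z) \<partial>lborel)"
    by (intro nn_integral_cmult) auto
  also have "\<dots> = ennreal (1 / sqrt r)"
    using r \<sigma> by (subst nn_integral_normal_density) (auto simp: \<sigma>'_def)
  also have "\<dots> \<le> ennreal (sqrt 2)"
  proof (intro ennreal_leI)
    have "sqrt (1/2) \<le> sqrt r" using r by simp
    then have "1 / sqrt r \<le> 1 / sqrt (1/2)" using r by (intro divide_left_mono) auto
    also have "1 / sqrt (1/2) = sqrt 2" by (simp add: real_sqrt_divide)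
    finally show "1 / sqrt r \<le> sqrt 2" .
  qed
  finally show ?thesis .
qed

lemma (in prob_space) gauss_sum_mgf:
  fixes \<zeta> :: "'i \<Rightarrow> 'a \<Rightarrow> real"
  assumes F: "finite F" and ind: "indep_vars (\<lambda>_. borel) \<zeta> F"
    and dist: "\<And>i. i \<in> F \<Longrightarrow> distributed M lborel (\<zeta> i) std_normal_density"
    and sv: "sv > 0" "(\<Sum>i\<in>F. (a i)\<^sup>2) \<le> sv"
  shows "(\<integral>\<^sup>+\<omega>. ennreal (exp (1 / (4 * sv) * (\<Sum>i\<in>F. a i * \<zeta> i \<omega>)\<^sup>2)) \<partial>M) \<le> ennreal (sqrt 2)"
proof -
  define F' where "F' = {i\<in>F. a i \<noteq> 0}"
  have F': "finite F'" "F' \<subseteq> F" unfolding F'_def using F by auto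
  have sumeq: "(\<Sum>i\<in>F. a i * \<zeta> i \<omega>) = (\<Sum>i\<in>F'. a i * \<zeta> i \<omega>)" for \<omega>
    by (rule sum.mono_neutral_right[OF F F'(2)]) (auto simp: F'_def)
  show ?thesis
  proof (cases "F' = {}")
    case True
    then have "(\<integral>\<^sup>+\<omega>. ennreal (exp (1 / (4 * sv) * (\<Sum>i\<in>F. a i * \<zeta> i \<omega>)\<^sup>2)) \<partial>M) = (\<integral>\<^sup>+\<omega>. 1 \<partial>M)"
      by (intro nn_integral_cong) (simp add: sumeq)
    also have "\<dots> = 1" using emeasure_space_1 by simp
    also have "\<dots> \<le> ennreal (sqrt 2)" by simp
    finally show ?thesis .
  next
    case False
    define \<sigma> where "\<sigma> = sqrt (\<Sum>i\<in>F'. (\<bar>a i\<bar> * 1)\<^sup>2)"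
    have "(\<Sum>i\<in>F'. (\<bar>a i\<bar> * 1)\<^sup>2) > 0"
      using False F' by (intro sum_pos) (auto simp: F'_def)
    then have \<sigma>0: "\<sigma> > 0" unfolding \<sigma>_def by simp
    have "(\<Sum>i\<in>F'. (\<bar>a i\<bar> * 1)\<^sup>2) \<le> (\<Sum>i\<in>F. (a i)\<^sup>2)"
    proof -
      have "(\<Sum>i\<in>F'. (\<bar>a i\<bar> * 1)\<^sup>2) = (\<Sum>i\<in>F'. (a i)\<^sup>2)" by simp
      also have "\<dots> \<le> (\<Sum>i\<in>F. (a i)\<^sup>2)" using F F' by (intro sum_mono2) auto
      finally show ?thesis .
    qed
    then have \<sigma>sv: "\<sigma>\<^sup>2 \<le> sv" unfolding \<sigma>_def using sv by (simp add: sum_nonneg)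
    have d1: "distributed M lborel (\<lambda>\<omega>. 0 + a i * \<zeta> i \<omega>) (normal_density (0 + a i * 0) (\<bar>a i\<bar> * 1))"
      if "i \<in> F'" for i
      using that F' by (intro normal_density_affine dist) (auto simp: F'_def)
    have ind': "indep_vars (\<lambda>_. borel) (\<lambda>i \<omega>. a i * \<zeta> i \<omega>) F'"
      using indep_vars_compose2[OF indep_vars_subset[OF ind F'(2)], of "\<lambda>i x. a i * x" "\<lambda>_. borel"]
      by simp
    have Z: "distributed M lborel (\<lambda>\<omega>. \<Sum>i\<in>F'. a i * \<zeta> i \<omega>)
        (normal_density (\<Sum>i\<in>F'. 0) (sqrt (\<Sum>i\<in>F'. (\<bar>a i\<bar> * 1)\<^sup>2)))"
      using d1 by (intro sum_indep_normal[OF F'(1) False ind']) (auto simp: F'_def)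
    then have Z': "distributed M lborel (\<lambda>\<omega>. \<Sum>i\<in>F'. a i * \<zeta> i \<omega>) (normal_density 0 \<sigma>)"
      unfolding \<sigma>_def by simp
    have "(\<integral>\<^sup>+\<omega>. ennreal (exp (1 / (4 * sv) * (\<Sum>i\<in>F. a i * \<zeta> i \<omega>)\<^sup>2)) \<partial>M)
       = (\<integral>\<^sup>+\<omega>. ennreal (exp (1 / (4 * sv) * (\<Sum>i\<in>F'. a i * \<zeta> i \<omega>)\<^sup>2)) \<partial>M)"
      by (simp add: sumeq)
    also have "\<dots> = (\<integral>\<^sup>+z. ennreal (normal_density 0 \<sigma> z) * ennreal (exp (1 / (4 * sv) * z\<^sup>2)) \<partial>lborel)"
      by (rule distributed_nn_integral[OF Z', symmetric]) simp
    also have "\<dots> \<le> ennreal (sqrt 2)"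
    proof (rule gauss_mgf[OF \<sigma>0])
      show "0 \<le> 1 / (4 * sv)" using sv by simp
      show "1 / (4 * sv) * \<sigma>\<^sup>2 \<le> 1 / 4" using \<sigma>sv sv by (simp add: field_simps)
    qed
    finally show ?thesis .
  qed
qed



lemma jensen_exp_01:
  fixes f :: "real \<Rightarrow> real"
  assumes cf: "continuous_on {0..1} f" and lam: "lam \<ge> 0"
  shows "exp (lam * integral {0..1} f) \<le> integral {0..1} (\<lambda>x. exp (lam * f x))"
proof -
  define Q where "Q = integral {0..1} f"
  have fi: "(f has_integral Q) {0..1}" unfolding Q_def
    using integrable_continuous_interval[OF cf] by (rule integrable_integral)
  have cg: "continuous_on {0..1} (\<lambda>x. exp (lam * f x))" by (intro continuous_intros cf)
  have gi: "((\<lambda>x. exp (lam * f x)) has_integral integral {0..1} (\<lambda>x. exp (lam * f x))) {0..1}"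
    using integrable_continuous_interval[OF cg] by (rule integrable_integral)
  have h1: "((\<lambda>x. exp (lam * Q) * (1 - lam * Q)) has_integral (exp (lam * Q) * (1 - lam * Q))) {0..1::real}"
    by (rule has_integral_eq_rhs[OF has_integral_const_real]) simp
  have h2: "((\<lambda>x. (exp (lam * Q) * lam) * f x) has_integral ((exp (lam * Q) * lam) * Q)) {0..1}"
    by (rule has_integral_mult_right[OF fi])
  have h: "((\<lambda>x. exp (lam * Q) * (1 - lam * Q) + (exp (lam * Q) * lam) * f x) has_integral
      (exp (lam * Q) * (1 - lam * Q) + (exp (lam * Q) * lam) * Q)) {0..1}"
    by (rule has_integral_add[OF h1 h2])
  have le: "exp (lam * Q) * (1 - lam * Q) + (exp (lam * Q) * lam) * f x \<le> exp (lam * f x)" for x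
  proof -
    have "1 + (lam * f x - lam * Q) \<le> exp (lam * f x - lam * Q)" by (rule exp_ge_add_one_self)
    then have "exp (lam * Q) * (1 + (lam * f x - lam * Q)) \<le> exp (lam * Q) * exp (lam * f x - lam * Q)"
      by (intro mult_left_mono) auto
    also have "\<dots> = exp (lam * f x)" by (simp add: exp_add[symmetric])
    finally show ?thesis by (simp add: algebra_simps)
  qed
  have "exp (lam * Q) * (1 - lam * Q) + (exp (lam * Q) * lam) * Q \<le> integral {0..1} (\<lambda>x. exp (lam * f x))"
    by (rule has_integral_le[OF h gi le])
  then show ?thesis unfolding Q_def[symmetric] by (simp add: algebra_simps)
qed

lemma (in prob_space) gauss_tail:
  fixes \<zeta> :: "'i \<Rightarrow> 'a \<Rightarrow> real" and \<phi> :: "'i \<Rightarrow> real \<Rightarrow> real" and c :: "'i \<Rightarrow> real"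
  assumes F: "finite F" and ind: "indep_vars (\<lambda>_. borel) \<zeta> F"
    and dist: "\<And>i. i \<in> F \<Longrightarrow> distributed M lborel (\<zeta> i) std_normal_density"
    and cont: "\<And>i. i \<in> F \<Longrightarrow> continuous_on UNIV (\<phi> i)"
    and sv: "sv > 0" "\<And>x. (\<Sum>i\<in>F. (c i * \<phi> i x)\<^sup>2) \<le> sv"
    and \<delta>: "\<delta> > 0"
  shows "measure M {\<omega> \<in> space M. sqrt (integral {0..1} (\<lambda>x. (\<Sum>i\<in>F. c i * \<zeta> i \<omega> * \<phi> i x)\<^sup>2)) > \<delta>}
     \<le> sqrt 2 * exp (- (\<delta>\<^sup>2 / (4 * sv)))"
proof -
  define lam where "lam = 1 / (4 * sv)"
  have lam0: "lam > 0" unfolding lam_def using sv by simp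
  define Y where "Y = (\<lambda>\<omega> x. \<Sum>i\<in>F. c i * \<zeta> i \<omega> * \<phi> i x)"
  define H where "H = (\<lambda>\<omega> x. ennreal (indicator {0..1::real} x * exp (lam * (Y \<omega> x)\<^sup>2)))"
  define G where "G = (\<lambda>\<omega>. \<integral>\<^sup>+x. H \<omega> x \<partial>lborel)"
  define E where "E = {\<omega> \<in> space M. sqrt (integral {0..1} (\<lambda>x. (\<Sum>i\<in>F. c i * \<zeta> i \<omega> * \<phi> i x)\<^sup>2)) > \<delta>}"
  have zm: "\<zeta> i \<in> borel_measurable M" if "i \<in> F" for i
    using distributed_measurable[OF dist[OF that]] by simp
  have pm: "\<phi> i \<in> borel_measurable borel" if "i \<in> F" for i
    using cont[OF that] by (rule borel_measurable_continuous_onI)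
  have Ym: "(\<lambda>p. Y (fst p) (snd p)) \<in> borel_measurable (M \<Otimes>\<^sub>M lborel)"
    unfolding Y_def
  proof (intro borel_measurable_sum borel_measurable_times borel_measurable_const)
    fix i assume i: "i \<in> F"
    show "(\<lambda>p. \<zeta> i (fst p)) \<in> borel_measurable (M \<Otimes>\<^sub>M lborel)"
      by (rule measurable_compose[OF measurable_fst zm[OF i]])
    show "(\<lambda>p. \<phi> i (snd p)) \<in> borel_measurable (M \<Otimes>\<^sub>M lborel)"
    proof (rule measurable_compose[OF measurable_snd])
      show "\<phi> i \<in> borel_measurable lborel" using pm[OF i] by simp
    qed
  qed
  have Hm: "case_prod H \<in> borel_measurable (M \<Otimes>\<^sub>M lborel)"
  proof -
    have mi: "(\<lambda>p. indicator {0..1::real} (snd p) :: real) \<in> borel_measurable (M \<Otimes>\<^sub>M lborel)"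
      by (rule measurable_compose[OF measurable_snd borel_measurable_indicator]) simp
    have me: "(\<lambda>p. exp (lam * (Y (fst p) (snd p))\<^sup>2)) \<in> borel_measurable (M \<Otimes>\<^sub>M lborel)"
      by (rule measurable_compose[OF _ borel_measurable_exp])
        (intro borel_measurable_times borel_measurable_const borel_measurable_power Ym)
    have "(\<lambda>p. indicator {0..1::real} (snd p) * exp (lam * (Y (fst p) (snd p))\<^sup>2)) \<in> borel_measurable (M \<Otimes>\<^sub>M lborel)"
      by (rule borel_measurable_times[OF mi me])
    from measurable_compose[OF this measurable_ennreal] show ?thesis
      unfolding H_def case_prod_beta by simp
  qed
  have jen: "ennreal (exp (lam * integral {0..1} (\<lambda>x. (Y \<omega> x)\<^sup>2))) \<le> G \<omega>" if \<omega>: "\<omega> \<in> space M" for \<omega>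
  proof -
    have cY: "continuous_on UNIV (Y \<omega>)" unfolding Y_def
      by (intro continuous_on_sum continuous_intros cont) 
    then have cY2: "continuous_on {0..1} (\<lambda>x. (Y \<omega> x)\<^sup>2)"
      by (intro continuous_intros) (auto intro: continuous_on_subset)
    have cg: "continuous_on UNIV (\<lambda>x. exp (lam * (Y \<omega> x)\<^sup>2))" by (intro continuous_intros cY)
    have gi: "((\<lambda>x. exp (lam * (Y \<omega> x)\<^sup>2)) has_integral integral {0..1} (\<lambda>x. exp (lam * (Y \<omega> x)\<^sup>2))) {0..1}"
      using integrable_continuous_interval[OF continuous_on_subset[OF cg]] by (intro integrable_integral) auto
    have "G \<omega> = ennreal (integral {0..1} (\<lambda>x. exp (lam * (Y \<omega> x)\<^sup>2)))"
    proof -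
      have "G \<omega> = integral\<^sup>N lborel (\<lambda>x. indicator {0..1::real} x * exp (lam * (Y \<omega> x)\<^sup>2))"
        unfolding G_def H_def ..
      also have "\<dots> = integral {0..1} (\<lambda>x. exp (lam * (Y \<omega> x)\<^sup>2))"
      proof (rule nn_integral_has_integral_lborel)
        show "(\<lambda>x. indicator {0..1::real} x * exp (lam * (Y \<omega> x)\<^sup>2)) \<in> borel_measurable borel"
          by (intro borel_measurable_times borel_measurable_indicator borel_measurable_continuous_onI[OF cg]) simp
        show "((\<lambda>x. indicator {0..1::real} x * exp (lam * (Y \<omega> x)\<^sup>2)) has_integral
          integral {0..1} (\<lambda>x. exp (lam * (Y \<omega> x)\<^sup>2))) UNIV"
        proof -
          have a: "((\<lambda>x. if x \<in> {0..1::real} then exp (lam * (Y \<omega> x)\<^sup>2) else 0) has_integral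
            integral {0..1} (\<lambda>x. exp (lam * (Y \<omega> x)\<^sup>2))) UNIV"
            using gi by (subst has_integral_restrict_UNIV)
          have b: "(\<lambda>x. indicator {0..1::real} x * exp (lam * (Y \<omega> x)\<^sup>2)) =
            (\<lambda>x. if x \<in> {0..1::real} then exp (lam * (Y \<omega> x)\<^sup>2) else 0)"
            by (auto simp: indicator_def)
          show ?thesis unfolding b by (rule a)
        qed
      qed auto
      finally show ?thesis .
    qed
    moreover have "exp (lam * integral {0..1} (\<lambda>x. (Y \<omega> x)\<^sup>2)) \<le> integral {0..1} (\<lambda>x. exp (lam * (Y \<omega> x)\<^sup>2))"
      using jensen_exp_01[OF cY2] lam0 by simp
    ultimately show ?thesis by (simp add: ennreal_leI)
  qed
  interpret pair_sigma_finite M lborel ..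
  have inner: "(\<integral>\<^sup>+\<omega>. H \<omega> x \<partial>M) \<le> ennreal (sqrt 2) * indicator {0..1::real} x" for x
  proof (cases "x \<in> {0..1}")
    case True
    have "(\<integral>\<^sup>+\<omega>. H \<omega> x \<partial>M) = (\<integral>\<^sup>+\<omega>. ennreal (exp (1 / (4 * sv) * (\<Sum>i\<in>F. (c i * \<phi> i x) * \<zeta> i \<omega>)\<^sup>2)) \<partial>M)"
      unfolding H_def Y_def lam_def using True by (intro nn_integral_cong) (simp add: mult_ac)
    also have "\<dots> \<le> ennreal (sqrt 2)"
      by (rule gauss_sum_mgf[OF F ind dist sv(1) sv(2)])
    finally show ?thesis using True by simp
  next
    case False then show ?thesis unfolding H_def by simp
  qed
  have "(\<integral>\<^sup>+\<omega>. G \<omega> \<partial>M) = (\<integral>\<^sup>+x. (\<integral>\<^sup>+\<omega>. H \<omega> x \<partial>M) \<partial>lborel)"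
    unfolding G_def by (rule Fubini'[OF Hm, symmetric])
  also have "\<dots> \<le> (\<integral>\<^sup>+x. ennreal (sqrt 2) * indicator {0..1::real} x \<partial>lborel)"
    by (rule nn_integral_mono) (rule inner)
  also have "\<dots> = ennreal (sqrt 2)" by (subst nn_integral_cmult_indicator) auto
  finally have EG: "(\<integral>\<^sup>+\<omega>. G \<omega> \<partial>M) \<le> ennreal (sqrt 2)" .
  show ?thesis
  proof (cases "E \<in> sets M")
    case False
    then have "measure M E = 0" by (simp add: measure_notin_sets)
    then show ?thesis unfolding E_def by simp
  next
    case True
    have pt: "ennreal (exp (lam * \<delta>\<^sup>2)) * indicator E \<omega> \<le> G \<omega>" if "\<omega> \<in> space M" for \<omega>
    proof (cases "\<omega> \<in> E")
      case True
      let ?Q = "integral {0..1} (\<lambda>x. (Y \<omega> x)\<^sup>2)"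
      have "\<delta> < sqrt ?Q" using True unfolding E_def Y_def by simp
      then have "\<delta>\<^sup>2 < ?Q"
      proof -
        assume a: "\<delta> < sqrt ?Q"
        then have "0 < sqrt ?Q" using \<delta> by linarith
        then have Q0: "0 < ?Q" by simp
        have "\<delta>\<^sup>2 < (sqrt ?Q)\<^sup>2" using a \<delta> by (intro power_strict_mono) auto
        then show ?thesis using Q0 by simp
      qed
      then have "exp (lam * \<delta>\<^sup>2) \<le> exp (lam * ?Q)" using lam0 by simp
      then have "ennreal (exp (lam * \<delta>\<^sup>2)) \<le> ennreal (exp (lam * ?Q))" by (rule ennreal_leI)
      also have "\<dots> \<le> G \<omega>" by (rule jen[OF that])
      finally show ?thesis using True by simp
    next
      case False then show ?thesis by simp
    qed
    have "ennreal (exp (lam * \<delta>\<^sup>2)) * emeasure M E = (\<integral>\<^sup>+\<omega>. ennreal (exp (lam * \<delta>\<^sup>2)) * indicator E \<omega> \<partial>M)"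
      by (rule nn_integral_cmult_indicator[OF True, symmetric])
    also have "\<dots> \<le> (\<integral>\<^sup>+\<omega>. G \<omega> \<partial>M)" by (intro nn_integral_mono pt)
    also have "\<dots> \<le> ennreal (sqrt 2)" by (rule EG)
    finally have "ennreal (exp (lam * \<delta>\<^sup>2) * measure M E) \<le> ennreal (sqrt 2)"
      by (simp add: emeasure_eq_measure ennreal_mult)
    then have "exp (lam * \<delta>\<^sup>2) * measure M E \<le> sqrt 2" by (simp add: ennreal_le_iff)
    then have "measure M E \<le> sqrt 2 / exp (lam * \<delta>\<^sup>2)" by (simp add: field_simps)
    also have "\<dots> = sqrt 2 * exp (- (\<delta>\<^sup>2 / (4 * sv)))"
      unfolding lam_def by (simp add: exp_minus field_simps)
    finally show ?thesis unfolding E_def .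
  qed
qed



lemma S_fun_prod: "S_fun \<eta> V h N z =
   (\<lambda>x. \<Sum>i\<in>{1..M_of h} \<times> {1..N}. z (fst i) (snd i) * D_fun \<eta> V h (fst i) (snd i) x)"
  unfolding S_fun_def by (rule ext) (simp add: sum.cartesian_product case_prod_beta)

lemma derivn_S_fun:
  assumes V: "smooth_real V" and eta: "\<eta> > 0" and h: "h > 0"
  shows "(deriv ^^ l) (S_fun \<eta> V h N z) =
   (\<lambda>x. \<Sum>i\<in>{1..M_of h} \<times> {1..N}. z (fst i) (snd i) * (deriv ^^ l) (D_fun \<eta> V h (fst i) (snd i)) x)"
proof -
  have sm: "smooth_real (\<lambda>x. z (fst i) (snd i) * D_fun \<eta> V h (fst i) (snd i) x)" for i
    by (intro smooth_cmult smooth_D_fun V eta h)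
  have "(deriv ^^ l) (S_fun \<eta> V h N z) =
    (\<lambda>x. \<Sum>i\<in>{1..M_of h} \<times> {1..N}. (deriv ^^ l) (\<lambda>x. z (fst i) (snd i) * D_fun \<eta> V h (fst i) (snd i) x) x)"
    unfolding S_fun_prod by (rule derivn_sum) (auto intro: sm)
  also have "\<dots> = (\<lambda>x. \<Sum>i\<in>{1..M_of h} \<times> {1..N}. z (fst i) (snd i) * (deriv ^^ l) (D_fun \<eta> V h (fst i) (snd i)) x)"
    by (simp add: derivn_cmult_smooth smooth_D_fun V eta h)
  finally show ?thesis .
qed

lemma key_power_bound:
  fixes h :: real and j :: nat
  assumes h: "0 < h" "h \<le> 1" and l: "l \<le> k - 1" and k: "k \<ge> 1" and j: "j \<ge> 1" and B: "B \<ge> 0"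
  shows "((1/h)^l * (B * ((pi + 1) * real j) ^ l))\<^sup>2 \<le> B\<^sup>2 * (pi + 1) ^ (2 * k) * (real j ^ (2 * (k - 1)) / h ^ (2 * k - 1))"
proof -
  have a: "((pi+1)*real j)^l = (pi+1)^l * real j^l" by (rule power_mult_distrib)
  have b: "(1/h)^l = 1/h^l" by (rule power_one_over)
  have e0: "((1/h)^l * (B * ((pi + 1) * real j) ^ l))\<^sup>2 = B\<^sup>2 * ((pi + 1) ^ l)\<^sup>2 * ((real j ^ l)\<^sup>2 / (h ^ l)\<^sup>2)"
    unfolding a b using h by (simp add: field_simps power2_eq_square)
  have e: "((1/h)^l * (B * ((pi + 1) * real j) ^ l))\<^sup>2 = B\<^sup>2 * (pi + 1) ^ (2 * l) * (real j ^ (2 * l) / h ^ (2 * l))"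
    unfolding e0 power_even_eq ..
  have p1: "(pi + 1) ^ (2 * l) \<le> (pi + 1) ^ (2 * k)"
    using l k pi_gt3 by (intro power_increasing) auto
  have p2: "real j ^ (2 * l) \<le> real j ^ (2 * (k - 1))"
    using l j by (intro power_increasing) auto
  have p3: "h ^ (2 * k - 1) \<le> h ^ (2 * l)"
    using l k h by (intro power_decreasing) auto
  have "real j ^ (2 * l) / h ^ (2 * l) \<le> real j ^ (2 * (k - 1)) / h ^ (2 * k - 1)"
    using p2 p3 h by (intro frac_le) auto
  then show ?thesis unfolding e
    using p1 B by (intro mult_mono) auto
qed



theorem proposition7p1:
  fixes k :: nat and \<eta> :: real and V :: "real \<Rightarrow> real"
    and h :: "nat \<Rightarrow> real" and N :: "nat \<Rightarrow> nat" and d :: "nat \<Rightarrow> real"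
    and t :: "nat \<Rightarrow> nat \<Rightarrow> nat \<Rightarrow> real"
    and M :: "'a measure" and \<zeta> :: "nat \<Rightarrow> nat \<Rightarrow> 'a \<Rightarrow> real"
  assumes k: "k \<ge> 1"
    and eta: "\<eta> > 0"
    and V_smooth: "smooth_real V"
    and V_supp: "\<And>u. \<bar>u\<bar> \<ge> 1 \<Longrightarrow> V u = 0"
    and V_int: "integral {-1..1} V = 1"
    and h_pos: "\<And>n. h n > 0"
    and t_pos: "\<And>n m j. 1 \<le> m \<Longrightarrow> m \<le> M_of (h n) \<Longrightarrow> 1 \<le> j \<Longrightarrow> j \<le> N n \<Longrightarrow> t n m j > 0"
    and P: "prob_space M"
    and zeta_indep: "prob_space.indep_vars M (\<lambda>_. borel) (\<lambda>(m, j). \<zeta> m j) UNIV"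
    and zeta_distr: "\<And>m j. distributed M lborel (\<zeta> m j) std_normal_density"
    \<comment> \<open>A1\<close>
    and A1_N: "filterlim N at_top sequentially"
    and A1_Np: "\<And>p::real. p > 0 \<Longrightarrow> (\<lambda>n. real (N n) powr p / real n) \<longlonglongrightarrow> 0"
    and A1_delta: "\<exists>\<delta>1 \<delta>2::real. 0 < \<delta>1 \<and> \<delta>1 < 1 \<and> \<delta>2 > 0 \<and>
                     h \<in> O(\<lambda>n. real n powr (- \<delta>1)) \<and> (\<lambda>n. 1 / h n) \<in> O(\<lambda>n. real n powr \<delta>2)"
    \<comment> \<open>A2\<close>
    and d_pos: "\<And>n. d n > 0"
    and A2_1: "(\<lambda>n. d n / h n ^ (2 * k - 1) *
                 (\<Sum>m=1..M_of (h n). \<Sum>j=1..N n. (t n m j)^2 * real j ^ (2 * (k - 1)))) \<longlonglongrightarrow> 0"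
    and A2_2: "(\<lambda>n. sqrt (d n) * t_star (M_of (h n)) (N n) (t n)) \<longlonglongrightarrow> 0"
    and A2_3: "\<And>p::real. p > 0 \<Longrightarrow> (\<lambda>n. real n powr p * exp (- d n / 2)) \<longlonglongrightarrow> 0"
  shows "\<forall>p::real. \<forall>\<delta>::real. p > 0 \<longrightarrow> \<delta> > 0 \<longrightarrow>
     (\<lambda>n. real n powr p *
        Max ((\<lambda>l. measure M {\<omega> \<in> space M.
               L2norm01 ((deriv ^^ l) (S_fun \<eta> V (h n) (N n) (\<lambda>m j. t n m j * \<zeta> m j \<omega>))) > \<delta>})
             ` {0..k-1})) \<longlonglongrightarrow> 0"
proof (intro allI impI)
  fix p \<delta> :: real assume p: "p > 0" and \<delta>: "\<delta> > 0"
  interpret prob_space M by (rule P)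
  obtain B where B0: "B \<ge> 0" and B: "\<forall>i\<le>k-1. \<forall>v. \<bar>(deriv ^^ i) (I_eta \<eta> V) v\<bar> \<le> B"
    using I_eta_bound_upto[OF V_smooth V_supp eta, of "k-1"] by blast
  define C2 where "C2 = B\<^sup>2 * (pi + 1) ^ (2 * k)"
  have C20: "C2 \<ge> 0" unfolding C2_def using pi_gt3 by simp
  define A where "A n = (\<Sum>m=1..M_of (h n). \<Sum>j=1..N n. (t n m j)^2 * real j ^ (2 * (k - 1)))" for n
  define T where "T n = d n / h n ^ (2 * k - 1) * A n" for n
  define s where "s n = (C2 * T n + 1 / (real n + 1)) / d n" for n
  have A0: "A n \<ge> 0" for n unfolding A_def by (intro sum_nonneg) auto
  have T0: "T n \<ge> 0" for n unfolding T_def using A0[of n] d_pos[of n] h_pos[of n]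
    by (intro mult_nonneg_nonneg divide_nonneg_pos) auto
  have s0: "s n > 0" for n unfolding s_def using C20 T0 d_pos
    by (intro divide_pos_pos add_nonneg_pos mult_nonneg_nonneg) auto
  have prob_bound: "measure M {\<omega> \<in> space M.
        L2norm01 ((deriv ^^ l) (S_fun \<eta> V (h n) (N n) (\<lambda>m j. t n m j * \<zeta> m j \<omega>))) > \<delta>}
      \<le> sqrt 2 * exp (- (\<delta>\<^sup>2 / (4 * s n)))" if hn: "h n \<le> 1" and l: "l \<le> k - 1" for n l
  proof -
    define F where "F = {1..M_of (h n)} \<times> {1..N n}"
    have F: "finite F" unfolding F_def by simp
    have eqset: "{\<omega> \<in> space M. L2norm01 ((deriv ^^ l) (S_fun \<eta> V (h n) (N n) (\<lambda>m j. t n m j * \<zeta> m j \<omega>))) > \<delta>}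
      = {\<omega> \<in> space M. sqrt (integral {0..1} (\<lambda>x. (\<Sum>i\<in>F. t n (fst i) (snd i) * \<zeta> (fst i) (snd i) \<omega> *
            (deriv ^^ l) (D_fun \<eta> V (h n) (fst i) (snd i)) x)\<^sup>2)) > \<delta>}"
      unfolding L2norm01_def derivn_S_fun[OF V_smooth eta h_pos] F_def by simp
    have ind: "indep_vars (\<lambda>_. borel) (\<lambda>i. \<zeta> (fst i) (snd i)) F"
    proof -
      have "(\<lambda>(m, j). \<zeta> m j) = (\<lambda>i. \<zeta> (fst i) (snd i))" by (rule ext) (simp add: split_beta)
      then show ?thesis using indep_vars_subset[OF zeta_indep subset_UNIV] by simp
    qed
    have cont: "continuous_on UNIV ((deriv ^^ l) (D_fun \<eta> V (h n) (fst i) (snd i)))" for i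
      by (intro smooth_continuous smooth_derivn smooth_D_fun V_smooth eta h_pos)
    have trm: "(t n (fst i) (snd i) * (deriv ^^ l) (D_fun \<eta> V (h n) (fst i) (snd i)) x)\<^sup>2
        \<le> (t n (fst i) (snd i))\<^sup>2 * real (snd i) ^ (2 * (k - 1)) * (C2 / h n ^ (2 * k - 1))"
      if i: "i \<in> F" for i x
    proof -
      have j: "snd i \<ge> 1" using i unfolding F_def by auto
      have bd: "\<bar>(deriv ^^ l) (D_fun \<eta> V (h n) (fst i) (snd i)) x\<bar>
          \<le> (1 / h n) ^ l * (B * ((pi + 1) * real (snd i)) ^ l)"
        by (rule D_fun_bound[OF V_smooth eta h_pos j l B])
      have "((deriv ^^ l) (D_fun \<eta> V (h n) (fst i) (snd i)) x)\<^sup>2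
          \<le> ((1 / h n) ^ l * (B * ((pi + 1) * real (snd i)) ^ l))\<^sup>2"
        using bd by (metis abs_le_square_iff abs_of_nonneg abs_ge_zero order_trans power2_abs)
      also have "\<dots> \<le> B\<^sup>2 * (pi + 1) ^ (2 * k) * (real (snd i) ^ (2 * (k - 1)) / h n ^ (2 * k - 1))"
        by (rule key_power_bound[OF h_pos hn l k j B0])
      finally have "((deriv ^^ l) (D_fun \<eta> V (h n) (fst i) (snd i)) x)\<^sup>2
          \<le> C2 * (real (snd i) ^ (2 * (k - 1)) / h n ^ (2 * k - 1))" unfolding C2_def .
      then have "(t n (fst i) (snd i))\<^sup>2 * ((deriv ^^ l) (D_fun \<eta> V (h n) (fst i) (snd i)) x)\<^sup>2
          \<le> (t n (fst i) (snd i))\<^sup>2 * (C2 * (real (snd i) ^ (2 * (k - 1)) / h n ^ (2 * k - 1)))"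
        by (intro mult_left_mono) auto
      then show ?thesis by (simp add: power_mult_distrib mult_ac)
    qed
    have svb: "(\<Sum>i\<in>F. (t n (fst i) (snd i) * (deriv ^^ l) (D_fun \<eta> V (h n) (fst i) (snd i)) x)\<^sup>2) \<le> s n" for x
    proof -
      have "(\<Sum>i\<in>F. (t n (fst i) (snd i) * (deriv ^^ l) (D_fun \<eta> V (h n) (fst i) (snd i)) x)\<^sup>2)
          \<le> (\<Sum>i\<in>F. (t n (fst i) (snd i))\<^sup>2 * real (snd i) ^ (2 * (k - 1)) * (C2 / h n ^ (2 * k - 1)))"
        by (rule sum_mono) (rule trm)
      also have "\<dots> = A n * (C2 / h n ^ (2 * k - 1))"
        unfolding A_def F_def sum_distrib_right[symmetric]
        by (simp add: sum.cartesian_product case_prod_beta)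
      also have "\<dots> = C2 * T n / d n" unfolding T_def using d_pos[of n] by (simp add: field_simps)
      also have "\<dots> \<le> s n" unfolding s_def using d_pos[of n]
        by (intro divide_right_mono) auto
      finally show ?thesis .
    qed
    have "measure M {\<omega> \<in> space M. sqrt (integral {0..1} (\<lambda>x. (\<Sum>i\<in>F. t n (fst i) (snd i) * \<zeta> (fst i) (snd i) \<omega> *
            (deriv ^^ l) (D_fun \<eta> V (h n) (fst i) (snd i)) x)\<^sup>2)) > \<delta>} \<le> sqrt 2 * exp (- (\<delta>\<^sup>2 / (4 * s n)))"
      by (rule gauss_tail[OF F ind zeta_distr cont s0 svb \<delta>])
    then show ?thesis unfolding eqset .
  qed
  obtain \<delta>1 where d1: "\<delta>1 > 0" "h \<in> O(\<lambda>n. real n powr (- \<delta>1))" using A1_delta by blast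
  obtain c where c: "c > 0" "eventually (\<lambda>n. norm (h n) \<le> c * norm (real n powr (- \<delta>1))) sequentially"
    using d1(2) by (elim landau_o.bigE)
  have "((\<lambda>n. real n powr (- \<delta>1)) \<longlongrightarrow> 0) sequentially"
    using d1(1) by (intro tendsto_neg_powr filterlim_real_sequentially) auto
  then have "((\<lambda>n. c * norm (real n powr (- \<delta>1))) \<longlongrightarrow> c * norm (0::real)) sequentially"
    by (intro tendsto_intros)
  then have "eventually (\<lambda>n. c * norm (real n powr (- \<delta>1)) < 1) sequentially"
    by (intro order_tendstoD) auto
  with c(2) have ev_h: "eventually (\<lambda>n. h n \<le> 1) sequentially"
    by eventually_elim auto
  have "T \<longlonglongrightarrow> 0" unfolding T_def A_def using A2_1 .
  moreover have "(\<lambda>n. 1 / (real n + 1)) \<longlonglongrightarrow> 0"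
    using LIMSEQ_Suc[OF lim_inverse_n'] by (simp add: add.commute)
  ultimately have "(\<lambda>n. C2 * T n + 1 / (real n + 1)) \<longlonglongrightarrow> C2 * 0 + 0"
    by (intro tendsto_intros)
  moreover have "d n * s n = C2 * T n + 1 / (real n + 1)" for n
    unfolding s_def using d_pos[of n] by simp
  ultimately have "(\<lambda>n. d n * s n) \<longlonglongrightarrow> 0" by simp
  then have ev_ds: "eventually (\<lambda>n. d n * s n < \<delta>\<^sup>2 / 2) sequentially"
    using \<delta> by (intro order_tendstoD) auto
  let ?f = "\<lambda>n. real n powr p *
        Max ((\<lambda>l. measure M {\<omega> \<in> space M.
               L2norm01 ((deriv ^^ l) (S_fun \<eta> V (h n) (N n) (\<lambda>m j. t n m j * \<zeta> m j \<omega>))) > \<delta>})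
             ` {0..k-1})"
  have ev: "eventually (\<lambda>n. 0 \<le> ?f n \<and> ?f n \<le> sqrt 2 * (real n powr p * exp (- d n / 2))) sequentially"
    using ev_h ev_ds
  proof eventually_elim
    case (elim n)
    have ex: "exp (- (\<delta>\<^sup>2 / (4 * s n))) \<le> exp (- d n / 2)"
    proof -
      have "d n * s n \<le> \<delta>\<^sup>2 / 2" using elim(2) by simp
      then have "d n / 2 \<le> \<delta>\<^sup>2 / (4 * s n)" using s0[of n] by (simp add: field_simps)
      then show ?thesis by simp
    qed
    let ?S = "(\<lambda>l. measure M {\<omega> \<in> space M.
               L2norm01 ((deriv ^^ l) (S_fun \<eta> V (h n) (N n) (\<lambda>m j. t n m j * \<zeta> m j \<omega>))) > \<delta>}) ` {0..k-1}"
    have fin: "finite ?S" "?S \<noteq> {}" by auto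
    have M1: "Max ?S \<le> sqrt 2 * exp (- d n / 2)"
    proof (subst Max_le_iff[OF fin], safe)
      fix l assume "l \<in> {0..k-1}"
      then have "l \<le> k - 1" by simp
      from prob_bound[OF elim(1) this] ex show "measure M {\<omega> \<in> space M.
               L2norm01 ((deriv ^^ l) (S_fun \<eta> V (h n) (N n) (\<lambda>m j. t n m j * \<zeta> m j \<omega>))) > \<delta>}
            \<le> sqrt 2 * exp (- d n / 2)"
        by (meson mult_left_mono order_trans real_sqrt_ge_zero zero_le_numeral)
    qed
    have M0: "0 \<le> Max ?S"
      by (rule order_trans[OF measure_nonneg Max_ge[OF fin(1)]]) (rule imageI, auto)
    have "real n powr p * Max ?S \<le> real n powr p * (sqrt 2 * exp (- d n / 2))"
      by (rule mult_left_mono[OF M1]) simp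
    also have "\<dots> = sqrt 2 * (real n powr p * exp (- d n / 2))" by (simp only: mult_ac)
    finally have up: "real n powr p * Max ?S \<le> sqrt 2 * (real n powr p * exp (- d n / 2))" .
    have lo: "0 \<le> real n powr p * Max ?S" by (rule mult_nonneg_nonneg[OF _ M0]) simp
    show ?case using up lo by blast
  qed
  have "(\<lambda>n. sqrt 2 * (real n powr p * exp (- d n / 2))) \<longlonglongrightarrow> sqrt 2 * 0"
    by (intro tendsto_intros A2_3 p)
  then have lim: "(\<lambda>n. sqrt 2 * (real n powr p * exp (- d n / 2))) \<longlonglongrightarrow> 0" by simp
  show "?f \<longlonglongrightarrow> 0"
    by (rule tendsto_sandwich[OF _ _ tendsto_const lim]) (use ev in \<open>auto elim: eventually_mono\<close>)
qed


end
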